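(* Let $n\ge2$, $\omega\in(0,1)$, and let $B$ be a random variable with mean $0$ and variance $1$. Let $B_1,\dots,B_n$ be independent with $B_i\overset{d}{=}\mu_i+\sigma_iB$, where $\sigma_i>0$ and $\sigma_1\le\cdots\le\sigma_n$. Use the identity sequence with the schedule $\boldsymbol x=\boldsymbol\mu+\alpha\boldsymbol\sigma$, i.e. $x_i=\mu_i+\alpha\sigma_i$, where $$\alpha=\sqrt{\frac{1-\omega}{2\omega}+\frac{\sigma_{n-1}}{2\sum_{i=1}^{n-1}\sigma_i}}.$$ Then $$r_\omega=\frac{C(\mathrm{Id},\boldsymbol x,\omega)}{\min\{C(\tau,\boldsymbol y,\omega):\tau\in\mathsf S_n,\ \boldsymbol y\in\mathbb R_+^n\}}\le K(B,\omega):=\frac{\sqrt{2\omega}}{\omega\,\mathbb E B(\omega)^-+(1-\omega)\,\mathbb E B(\omega)^+},$$ where $B(\omega)=B-Q_B(1-\omega)$ and $Q_B(y)=\inf\{x:y\le\mathbb P(B\le x)\}$.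
   Context: Appointment model: a sequence is a permutation $\tau\in\mathsf S_n$ of $\{1,\dots,n\}$, $\tau(i)$ being the patient in appointment slot $i$. A schedule is a vector $\boldsymbol y=(y_1,\dots,y_n)$, where $y_j$ is the interarrival time between patient $j$ and the next patient. Waiting times $W_i$ and idle times $I_i$ of slot $i$ are given by $W_1=I_1=0$ and $W_{i+1}=(W_i+B_{\tau(i)}-y_{\tau(i)})^+$, $I_{i+1}=(W_i+B_{\tau(i)}-y_{\tau(i)})^-$, where $a^+=\max\{0,a\}$, $a^-=\max\{0,-a\}$. The cost is $C(\tau,\boldsymbol y,\omega)=\omega\sum_{i=1}^n\mathbb E I_i+(1-\omega)\sum_{i=1}^n\mathbb E W_i$. $\mathrm{Id}$ is the identity permutation. *)

theory Defs
  imports "HOL-Probability.Probability" "HOL-Combinatorics.Permutations"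
begin

text \<open>Realization-wise waiting time W_i and idle time I_i of slot i (slots 1..n),
  given sequence tau, schedule y (indexed by patient) and service times b (indexed by patient).
  Index 0 is unused.\<close>
primrec wait_time :: "(nat \<Rightarrow> nat) \<Rightarrow> (nat \<Rightarrow> real) \<Rightarrow> (nat \<Rightarrow> real) \<Rightarrow> nat \<Rightarrow> real" where
  "wait_time \<tau> y b 0 = 0"
| "wait_time \<tau> y b (Suc i) =
     (if i = 0 then 0 else max 0 (wait_time \<tau> y b i + b (\<tau> i) - y (\<tau> i)))"

fun idle_time :: "(nat \<Rightarrow> nat) \<Rightarrow> (nat \<Rightarrow> real) \<Rightarrow> (nat \<Rightarrow> real) \<Rightarrow> nat \<Rightarrow> real" where
  "idle_time \<tau> y b 0 = 0"
| "idle_time \<tau> y b (Suc i) =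
     (if i = 0 then 0 else max 0 (- (wait_time \<tau> y b i + b (\<tau> i) - y (\<tau> i))))"

definition appt_cost ::
  "'a measure \<Rightarrow> (nat \<Rightarrow> 'a \<Rightarrow> real) \<Rightarrow> nat \<Rightarrow> (nat \<Rightarrow> nat) \<Rightarrow> (nat \<Rightarrow> real) \<Rightarrow> real \<Rightarrow> real" where
  "appt_cost M Bs n \<tau> y \<omega> =
     \<omega> * (\<Sum>i = 1..n. integral\<^sup>L M (\<lambda>s. idle_time \<tau> y (\<lambda>j. Bs j s) i))
     + (1 - \<omega>) * (\<Sum>i = 1..n. integral\<^sup>L M (\<lambda>s. wait_time \<tau> y (\<lambda>j. Bs j s) i))"

definition quantile :: "'b measure \<Rightarrow> ('b \<Rightarrow> real) \<Rightarrow> real \<Rightarrow> real" where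
  "quantile N B p = Inf {x. p \<le> measure N {s \<in> space N. B s \<le> x}}"

definition K_bound :: "'b measure \<Rightarrow> ('b \<Rightarrow> real) \<Rightarrow> real \<Rightarrow> real" where
  "K_bound N B \<omega> =
     (let q = quantile N B (1 - \<omega>) in
      sqrt (2 * \<omega>) /
        (\<omega> * integral\<^sup>L N (\<lambda>s. max 0 (- (B s - q)))
         + (1 - \<omega>) * integral\<^sup>L N (\<lambda>s. max 0 (B s - q))))"

end

theory Submission
  imports Defs
begin

lemma subgrad:
  fixes \<omega> r d :: real
  assumes "0 \<le> \<omega>" "\<omega> \<le> 1"
  shows "\<omega> * max 0 (-(r-d)) + (1-\<omega>)*max 0 (r-d) \<ge> \<omega>*max 0 (-r) + (1-\<omega>)*max 0 r
     + max 0 d * (if r \<le> 0 then \<omega> else \<omega>-1) - max 0 (-d) * (if r<0 then \<omega> else \<omega> - 1)"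
proof -
  have h1: "\<omega> * a \<le> \<omega> * b" if "a \<le> b" for a b using assms that by (simp add: mult_left_mono)
  have h2: "\<omega> * a \<le> a" if "0 \<le> a" for a using assms that by (simp add: mult_left_le_one_le)
  show ?thesis
  proof (cases "r < 0")
    case True
    then show ?thesis using h1[of r d] h1[of d r] h1[of r 0] h1[of d 0] h1[of 0 d] h2[of "d - r"] h2[of "r-d"] h2[of d] h2[of "-d"] assms
      by (cases "d \<le> 0"; cases "r \<le> d") (simp_all add: max_def algebra_simps)
  next
    case False
    then show ?thesis using h1[of r d] h1[of d r] h1[of 0 r] h1[of d 0] h1[of 0 d] h2[of "d - r"] h2[of "r-d"] h2[of d] h2[of "-d"] h2[of r] assms
      by (cases "d \<le> 0"; cases "r \<le> d"; cases "r = 0") (simp_all add: max_def algebra_simps)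
  qed
qed

lemma final_alg:
  fixes \<omega> S c w T \<alpha> :: real
  assumes om: "0 < \<omega>" "\<omega> < 1" and S: "0 < S" and c: "0 < c" "c \<le> S"
    and al: "\<alpha> = sqrt ((1 - \<omega>) / (2 * \<omega>) + c / (2 * S))"
    and w: "0 \<le> w" "w \<le> T" and con: "2 * \<alpha> * T + w^2 / c \<le> S"
  shows "\<omega> * (w + \<alpha> * S) + (1 - \<omega>) * T \<le> sqrt (2 * \<omega>) * S"
proof -
  define \<rho> where "\<rho> = 1 - \<omega> + \<omega> * c / S"
  define p where "p = sqrt \<rho>"
  define r where "r = sqrt (2 * \<omega>)"
  have cS: "c / S \<le> 1" "0 < c / S" using c S by auto
  have rho_pos: "0 < \<rho>"
  proof -
    have "0 \<le> \<omega> * c / S" using om c S by simp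
    then show ?thesis unfolding \<rho>_def using om by linarith
  qed
  have rho_le: "\<rho> \<le> 1"
  proof -
    have "\<omega> * (c / S) \<le> \<omega>" using mult_left_le[of "c/S" \<omega>] om cS by linarith
    then show ?thesis unfolding \<rho>_def by simp
  qed
  have rho_ge: "c / S \<le> \<rho>"
  proof -
    have eq: "\<rho> - c/S = (1-\<omega>)*(1-c/S)" unfolding \<rho>_def using S by (simp add: field_simps)
    have "0 \<le> (1-\<omega>)*(1-c/S)" using om cS by simp
    then show ?thesis using eq by linarith
  qed
  have r_pos: "0 < r" unfolding r_def using om by simp
  have r2: "r^2 = 2 * \<omega>" unfolding r_def using om by simp
  have p_pos: "0 < p" unfolding p_def using rho_pos by simp
  have p2: "p^2 = \<rho>" unfolding p_def using rho_pos by simp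
  have p_le: "p \<le> 1" unfolding p_def using rho_le by simp
  have arg: "(1 - \<omega>) / (2 * \<omega>) + c / (2 * S) = \<rho> / (2 * \<omega>)"
    unfolding \<rho>_def using om S by (simp add: field_simps)
  have al2: "\<alpha> = p / r" unfolding al arg p_def r_def by (simp add: real_sqrt_divide)
  have al_pos: "0 < \<alpha>" using al2 p_pos r_pos by simp
  have step1: "\<omega> * w + (1 - \<omega>) * T \<le> (1 - \<rho>) * w + \<rho> * T"
  proof -
    have "0 \<le> (\<rho> - 1 + \<omega>) * (T - w)" unfolding \<rho>_def using om c S w by simp
    then show ?thesis by (simp add: algebra_simps)
  qed
  have step2: "\<rho> * T \<le> \<rho> * (S - w^2 / c) / (2 * \<alpha>)"
  proof -
    have "T \<le> (S - w^2/c) / (2 * \<alpha>)" using con al_pos by (simp add: field_simps)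
    then have "\<rho> * T \<le> \<rho> * ((S - w^2/c) / (2*\<alpha>))" using rho_pos by (intro mult_left_mono) auto
    then show ?thesis by simp
  qed
  have step3: "(1 - \<rho>) * w - \<rho> * w^2 / (2 * \<alpha> * c) \<le> \<alpha> * c * (1 - \<rho>)^2 / (2 * \<rho>)"
  proof -
    have "0 \<le> (\<rho> * w - \<alpha> * c * (1 - \<rho>))^2" by simp
    then have "0 \<le> \<rho>^2 * w^2 - 2 * \<rho> * w * \<alpha> * c * (1 - \<rho>) + \<alpha>^2 * c^2 * (1-\<rho>)^2"
      by (simp add: power2_eq_square algebra_simps)
    then show ?thesis using rho_pos al_pos c
      by (simp add: field_simps power2_eq_square)
  qed
  have bound: "\<omega> * (w + \<alpha> * S) + (1 - \<omega>) * T \<le> \<omega> * \<alpha> * S + \<rho> * S / (2 * \<alpha>) + \<alpha> * c * (1 - \<rho>)^2 / (2 * \<rho>)"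
  proof -
    have "\<rho> * (S - w^2 / c) / (2 * \<alpha>) = \<rho> * S / (2 * \<alpha>) - \<rho> * w^2 / (2 * \<alpha> * c)"
      using al_pos c by (simp add: field_simps)
    then show ?thesis using step1 step2 step3 by (simp add: algebra_simps)
  qed
  have e1: "\<omega> * \<alpha> * S + \<rho> * S / (2 * \<alpha>) = r * p * S"
  proof -
    have om2: "\<omega> = r^2/2" using r2 by simp
    have "\<omega> * \<alpha> * S + \<rho> * S / (2 * \<alpha>) = (r^2/2)*(p/r)*S + p^2*S/(2*(p/r))"
      unfolding al2 p2[symmetric] by (subst om2, rule refl)
    also have "\<dots> = r * p * S" using r_pos p_pos by (simp add: field_simps power2_eq_square)
    finally show ?thesis .
  qed
  have one_rho: "1 - \<rho> = \<omega> * (1 - c / S)" unfolding \<rho>_def by (simp add: algebra_simps)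
  have pc: "c / S \<le> p"
  proof -
    have "(c/S)*(c/S) \<le> (c/S)*1" using cS by (intro mult_left_mono) auto
    then have "c / S \<le> sqrt (c / S)" by (intro real_le_rsqrt) (simp add: power2_eq_square)
    also have "\<dots> \<le> p" unfolding p_def using rho_ge by simp
    finally show ?thesis .
  qed
  have e2: "\<alpha> * c * (1 - \<rho>)^2 / (2 * \<rho>) \<le> r * S * (1 - p)"
  proof -
    have X: "(1 - p^2)^2 = (1-p)^2 * (1+p)^2" by algebra
    have "\<alpha> * c * (1 - \<rho>)^2 / (2 * \<rho>) = (p/r) * c * ((1-p)^2 * (1+p)^2) / (2 * p^2)"
      unfolding al2 p2[symmetric] X by simp
    also have "\<dots> = c * ((1-p)^2 * (1+p)^2) / (2 * r * p)"
      using r_pos p_pos by (simp add: field_simps power2_eq_square)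
    finally have lhs: "\<alpha> * c * (1 - \<rho>)^2 / (2 * \<rho>) = c * (1-p)^2 * (1+p)^2 / (2 * r * p)"
      by (simp add: mult.assoc)
    have Y0: "(1-p)*(1+p) = 1 - p^2" by algebra
    have Y: "(1-p)*(1+p) = \<omega>*(1-c/S)" using Y0 one_rho p2 by simp
    have Z: "c * (1-p) * (1+p)^2 = c*((1-p)*(1+p))*(1+p)" by algebra
    have "c * (1-p) * (1+p)^2 = c * \<omega> * (1 - c/S) * (1 + p)"
      unfolding Z Y by (simp add: mult.assoc)
    also have "\<dots> \<le> c * \<omega> * 1 * 2"
      using c om cS p_le p_pos by (intro mult_mono) auto
    also have "\<dots> \<le> 4 * \<omega> * p * S"
    proof -
      have "c \<le> p * S" using pc S by (simp add: field_simps)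
      then have "\<omega> * c \<le> \<omega> * (p * S)" using om by (simp add: mult_left_mono)
      moreover have "0 \<le> \<omega>*(p*S)" using om p_pos S by simp
      ultimately show ?thesis by (simp add: algebra_simps)
    qed
    finally have A: "c * (1-p) * (1+p)^2 \<le> 4 * \<omega> * p * S" .
    have "c * (1-p)^2 * (1+p)^2 = (1 - p) * (c * (1-p) * (1+p)^2)" by (simp add: power2_eq_square)
    also have "\<dots> \<le> (1 - p) * (4 * \<omega> * p * S)" using A p_le by (intro mult_left_mono) auto
    also have "\<dots> = (1 - p) * (2 * r^2 * p * S)" using r2 by simp
    finally have B: "c * (1-p)^2 * (1+p)^2 \<le> (1 - p) * (2 * r^2 * p * S)" .
    have "c * (1-p)^2 * (1+p)^2 / (2 * r * p) \<le> (1 - p) * (2 * r^2 * p * S) / (2 * r * p)"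
      using B r_pos p_pos by (intro divide_right_mono) auto
    also have "\<dots> = r * S * (1 - p)" using r_pos p_pos by (simp add: field_simps power2_eq_square)
    finally show ?thesis using lhs by simp
  qed
  show ?thesis using bound e1 e2 unfolding r_def[symmetric] by (simp add: algebra_simps)
qed

lemma kstep:
  fixes a a' e' b b' f' s \<alpha> :: real
  assumes l: "a' - e' = a - \<alpha> * s" and q: "b' + f' = b - 2*\<alpha>* s*a + s^2*(1+\<alpha>^2)"
    and fe: "e'^2 \<le> f'"
  shows "b' + 2*\<alpha>* s*a' \<le> b + s^2"
proof -
  have e: "e' = (a' - a) + \<alpha>* s" using l by simp
  have E: "e'^2 = (a'-a)^2 + 2*\<alpha>* s*(a'-a) + \<alpha>^2* s^2" unfolding e by (simp add: power2_eq_square algebra_simps)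
  have "0 \<le> (a'-a)^2" by simp
  then show ?thesis using E q fe by (simp add: algebra_simps power2_eq_square)
qed

lemma kseq:
  fixes a b e f \<sigma> :: "nat \<Rightarrow> real" and \<alpha> :: real and m :: nat
  assumes al: "0 < \<alpha>"
    and sp: "\<And>i. 1 \<le> i \<Longrightarrow> i \<le> m \<Longrightarrow> 0 < \<sigma> i"
    and mono: "\<And>i. 1 \<le> i \<Longrightarrow> i < m \<Longrightarrow> \<sigma> i \<le> \<sigma> (Suc i)"
    and lin: "\<And>i. 1 \<le> i \<Longrightarrow> i \<le> m \<Longrightarrow> a (Suc i) - e (Suc i) = a i - \<alpha> * \<sigma> i"
    and sq: "\<And>i. 1 \<le> i \<Longrightarrow> i \<le> m \<Longrightarrow> b (Suc i) + f (Suc i) = b i - 2*\<alpha>*\<sigma> i*a i + (\<sigma> i)^2*(1+\<alpha>^2)"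
    and fe: "\<And>i. 1 \<le> i \<Longrightarrow> i \<le> m \<Longrightarrow> (e (Suc i))^2 \<le> f (Suc i)"
    and b1: "b 1 = 0" and bnn: "\<And>i. 0 \<le> b i"
  shows "k < m \<Longrightarrow> 2*\<alpha>*(\<Sum>i=2..Suc (Suc k). a i) + b (Suc (Suc k)) / \<sigma> (Suc k) \<le> (\<Sum>i=1..Suc k. \<sigma> i)"
proof (induction k)
  case 0
  have st: "b 2 + 2*\<alpha>*\<sigma> 1*a 2 \<le> b 1 + (\<sigma> 1)^2"
    using kstep[OF lin[of 1] sq[of 1] fe[of 1]] 0 by (simp add: numeral_2_eq_2)
  have s1: "0 < \<sigma> 1" using sp[of 1] 0 by simp
  have "(b 2 + 2*\<alpha>*\<sigma> 1*a 2) / \<sigma> 1 \<le> (b 1 + (\<sigma> 1)^2) / \<sigma> 1"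
    using st s1 by (intro divide_right_mono) auto
  then have "b 2 / \<sigma> 1 + 2*\<alpha>*a 2 \<le> \<sigma> 1" using s1 b1 by (simp add: field_simps power2_eq_square)
  then show ?case by (simp add: numeral_2_eq_2)
next
  case (Suc k)
  let ?j = "Suc (Suc k)"
  have IH: "2*\<alpha>*(\<Sum>i=2..?j. a i) + b ?j / \<sigma> (Suc k) \<le> (\<Sum>i=1..Suc k. \<sigma> i)"
    using Suc by simp
  have st: "b (Suc ?j) + 2*\<alpha>*\<sigma> ?j*a (Suc ?j) \<le> b ?j + (\<sigma> ?j)^2"
    using kstep[OF lin[of ?j] sq[of ?j] fe[of ?j]] Suc.prems by simp
  have sj: "0 < \<sigma> ?j" using sp[of ?j] Suc.prems by simp
  have sk: "0 < \<sigma> (Suc k)" using sp[of "Suc k"] Suc.prems by simp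
  have mo: "\<sigma> (Suc k) \<le> \<sigma> ?j" using mono[of "Suc k"] Suc.prems by simp
  have "(b (Suc ?j) + 2*\<alpha>*\<sigma> ?j*a (Suc ?j)) / \<sigma> ?j \<le> (b ?j + (\<sigma> ?j)^2) / \<sigma> ?j"
    using st sj by (intro divide_right_mono) auto
  then have A: "b (Suc ?j) / \<sigma> ?j + 2*\<alpha>*a (Suc ?j) \<le> b ?j / \<sigma> ?j + \<sigma> ?j"
    using sj by (simp add: field_simps power2_eq_square)
  have B: "b ?j / \<sigma> ?j \<le> b ?j / \<sigma> (Suc k)"
    using bnn[of ?j] sk mo by (intro divide_left_mono) auto
  have S1: "(\<Sum>i=2..Suc ?j. a i) = (\<Sum>i=2..?j. a i) + a (Suc ?j)" by simp
  have S2: "(\<Sum>i=1..Suc (Suc k). \<sigma> i) = (\<Sum>i=1..Suc k. \<sigma> i) + \<sigma> ?j" by simp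
  show ?case unfolding S1 S2 using IH A B by (simp add: algebra_simps)
qed

lemma quantile_props:
  fixes N :: "'b measure" and B :: "'b \<Rightarrow> real" and p :: real
  assumes PN: "prob_space N" and Bm: "B \<in> borel_measurable N" and p: "0 < p" "p < 1"
  shows "p \<le> measure N {s\<in>space N. B s \<le> quantile N B p}"
    and "measure N {s\<in>space N. B s < quantile N B p} \<le> p"
proof -
  interpret N: prob_space N by (rule PN)
  define D where "D = distr N borel B"
  interpret D: real_distribution D unfolding D_def using Bm by simp
  have cdfF: "cdf D x = measure N {s\<in>space N. B s \<le> x}" for x
    unfolding cdf_def D_def using Bm by (subst measure_distr) (auto intro!: arg_cong[where f="measure N"])
  have ltF: "measure D {..<x} = measure N {s\<in>space N. B s < x}" for x
    unfolding D_def using Bm by (subst measure_distr) (auto intro!: arg_cong[where f="measure N"])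
  define S where "S = {x. p \<le> cdf D x}"
  have qS: "quantile N B p = Inf S" unfolding quantile_def S_def cdfF ..
  have "eventually (\<lambda>x. cdf D x > p) at_top"
    using D.cdf_lim_at_top_prob p by (intro order_tendstoD) auto
  then obtain x0 where "p < cdf D x0" by (metis eventually_at_top_linorder order_refl)
  then have Sne: "S \<noteq> {}" unfolding S_def by (metis (mono_tags, lifting) empty_Collect_eq less_imp_le)
  have "eventually (\<lambda>x. cdf D x < p) at_bot"
    using D.cdf_lim_at_bot p by (intro order_tendstoD) auto
  then obtain L where L: "\<And>x. x \<le> L \<Longrightarrow> cdf D x < p" by (metis eventually_at_bot_linorder)
  have Sbdd: "bdd_below S"
  proof
    fix x assume "x \<in> S"
    then have "p \<le> cdf D x" unfolding S_def by simp
    then show "L \<le> x" using L[of x] by linarith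
  qed
  define q where "q = Inf S"
  have up: "p \<le> cdf D x" if qx: "q < x" for x
  proof -
    obtain s where "s \<in> S" "s < x" using qx Sne unfolding q_def by (meson cInf_lessD)
    then show ?thesis unfolding S_def using D.cdf_nondecreasing[of s x] by simp
  qed
  have low: "cdf D x < p" if "x < q" for x
  proof (rule ccontr)
    assume "\<not> cdf D x < p"
    then have "x \<in> S" unfolding S_def by simp
    then have "q \<le> x" unfolding q_def using Sbdd by (rule cInf_lower)
    then show False using that by simp
  qed
  have "(cdf D \<longlongrightarrow> cdf D q) (at_right q)"
    using D.cdf_is_right_cont[of q] by (simp add: continuous_within)
  moreover have "eventually (\<lambda>x. p \<le> cdf D x) (at_right q)"
    using eventually_at_right_less[of q] by (rule eventually_mono) (rule up)
  ultimately have "p \<le> cdf D q" by (rule tendsto_lowerbound) simp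
  then show "p \<le> measure N {s\<in>space N. B s \<le> quantile N B p}" unfolding qS q_def[symmetric] cdfF .
  have "eventually (\<lambda>x. p \<ge> cdf D x) (at_left q)"
    by (rule eventually_at_leftI[of "q - 1"]) (auto dest: low intro: less_imp_le)
  with D.cdf_at_left[of q] have "measure D {..<q} \<le> p" by (rule tendsto_upperbound) simp
  then show "measure N {s\<in>space N. B s < quantile N B p} \<le> p" unfolding qS q_def[symmetric] ltF .
qed

lemma wait_cong:
  "(\<And>j. 1 \<le> j \<Longrightarrow> j < k \<Longrightarrow> f (\<tau> j) = g (\<tau> j)) \<Longrightarrow> wait_time \<tau> y f k = wait_time \<tau> y g k"
proof (induction k)
  case 0 then show ?case by simp
next
  case (Suc k)
  then show ?case by (cases "k = 0") auto
qed

lemma wait_meas_pi: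
  "(\<And>j. 1 \<le> j \<Longrightarrow> j < k \<Longrightarrow> \<tau> j \<in> A) \<Longrightarrow> (\<lambda>f. wait_time \<tau> y f k) \<in> borel_measurable (PiM A (\<lambda>_. borel))"
proof (induction k)
  case 0 then show ?case by simp
next
  case (Suc k)
  show ?case
  proof (cases "k = 0")
    case True then show ?thesis by simp
  next
    case False
    then have "\<tau> k \<in> A" using Suc.prems[of k] by simp
    then have m: "(\<lambda>f. f (\<tau> k)) \<in> borel_measurable (PiM A (\<lambda>_. borel))"
      by (rule measurable_component_singleton)
    have ih: "(\<lambda>f. wait_time \<tau> y f k) \<in> borel_measurable (PiM A (\<lambda>_. borel))"
      using Suc by simp
    note [measurable] = m ih
    show ?thesis using False by simp
  qed
qed

lemma sq3: "((a::real) + b - c)^2 \<le> 3 * (a^2 + b^2 + c^2)"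
proof -
  have "0 \<le> (a-b)^2 + (a+c)^2 + (b+c)^2" by simp
  then show ?thesis by (simp add: power2_eq_square algebra_simps)
qed

lemma maxsq: "(max 0 (x::real))^2 \<le> x^2" "(max 0 (-x))^2 \<le> x^2"
  by (auto simp: max_def)

locale appt =
  fixes M :: "'a measure" and Bs :: "nat \<Rightarrow> 'a \<Rightarrow> real" and N :: "'b measure" and B :: "'b \<Rightarrow> real"
    and n :: nat and \<mu> \<sigma> :: "nat \<Rightarrow> real"
  assumes PM: "prob_space M" and PN: "prob_space N" and Bm[measurable]: "B \<in> borel_measurable N"
    and B2: "integrable N (\<lambda>s. (B s)^2)" and EB: "integral\<^sup>L N B = 0"
    and VB: "integral\<^sup>L N (\<lambda>s. (B s - integral\<^sup>L N B)^2) = 1"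
    and Bsm: "\<And>i. i \<in> {1..n} \<Longrightarrow> Bs i \<in> borel_measurable M"
    and ind: "prob_space.indep_vars M (\<lambda>_. borel) Bs {1..n}"
    and dist: "\<And>i. i \<in> {1..n} \<Longrightarrow> distr M borel (Bs i) = distr N borel (\<lambda>s. \<mu> i + \<sigma> i * B s)"
    and sp: "\<And>i. i \<in> {1..n} \<Longrightarrow> 0 < \<sigma> i"
begin

sublocale M: prob_space M by (rule PM)
sublocale N: prob_space N by (rule PN)

lemma B_int: "integrable N B"
  by (rule N.square_integrable_imp_integrable[OF Bm B2])

lemma EB2: "integral\<^sup>L N (\<lambda>s. (B s)^2) = 1"
  using VB EB by simp

lemma tr_int:
  fixes g :: "real \<Rightarrow> real"
  assumes i: "i \<in> {1..n}" and g[measurable]: "g \<in> borel_measurable borel"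
  shows "integral\<^sup>L M (\<lambda>s. g (Bs i s)) = integral\<^sup>L N (\<lambda>s. g (\<mu> i + \<sigma> i * B s))"
proof -
  have [measurable]: "Bs i \<in> borel_measurable M" using Bsm[OF i] .
  have "integral\<^sup>L M (\<lambda>s. g (Bs i s)) = integral\<^sup>L (distr M borel (Bs i)) g"
    using integral_distr[OF Bsm[OF i] g] by simp
  also have "\<dots> = integral\<^sup>L (distr N borel (\<lambda>s. \<mu> i + \<sigma> i * B s)) g" using dist[OF i] by simp
  also have "\<dots> = integral\<^sup>L N (\<lambda>s. g (\<mu> i + \<sigma> i * B s))"
    by (rule integral_distr) measurable
  finally show ?thesis .
qed

lemma tr_integrable:
  fixes g :: "real \<Rightarrow> real"
  assumes i: "i \<in> {1..n}" and g[measurable]: "g \<in> borel_measurable borel"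
  shows "integrable M (\<lambda>s. g (Bs i s)) \<longleftrightarrow> integrable N (\<lambda>s. g (\<mu> i + \<sigma> i * B s))"
proof -
  have [measurable]: "Bs i \<in> borel_measurable M" using Bsm[OF i] .
  have "integrable M (\<lambda>s. g (Bs i s)) \<longleftrightarrow> integrable (distr M borel (Bs i)) g"
    using integrable_distr_eq[OF Bsm[OF i] g] by simp
  also have "\<dots> \<longleftrightarrow> integrable (distr N borel (\<lambda>s. \<mu> i + \<sigma> i * B s)) g" using dist[OF i] by simp
  also have "\<dots> \<longleftrightarrow> integrable N (\<lambda>s. g (\<mu> i + \<sigma> i * B s))"
    by (rule integrable_distr_eq) measurable
  finally show ?thesis .
qed

lemma Bs_int:
  assumes i: "i \<in> {1..n}" shows "integrable M (Bs i)"
proof -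
  have 1: "integrable N (\<lambda>s. \<mu> i + \<sigma> i * B s)"
    using B_int by simp
  have 2: "(\<lambda>u::real. u) \<in> borel_measurable borel" by (rule measurable_ident_sets) (rule refl)
  from tr_integrable[OF i 2] 1 show ?thesis by simp
qed

lemma Bs_int2: "i \<in> {1..n} \<Longrightarrow> integrable M (\<lambda>s. (Bs i s)^2)"
proof -
  assume i: "i \<in> {1..n}"
  have "integrable N (\<lambda>s. (\<mu> i)^2 + (2 * \<mu> i * \<sigma> i) * B s + (\<sigma> i)^2 * (B s)^2)"
    using B_int B2 by auto
  then have "integrable N (\<lambda>s. (\<mu> i + \<sigma> i * B s)^2)"
    by (simp add: power2_eq_square algebra_simps)
  then show ?thesis using tr_integrable[OF i, of "\<lambda>u. u^2"] by simp
qed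

context
  fixes \<tau> :: "nat \<Rightarrow> nat" and y :: "nat \<Rightarrow> real"
  assumes perm: "\<tau> permutes {1..n}"
begin

lemma tau_in: "k \<in> {1..n} \<Longrightarrow> \<tau> k \<in> {1..n}"
  using permutes_in_image[OF perm, of k] by blast

lemma L2_step:
  fixes X :: "'a \<Rightarrow> real" and c :: real
  assumes X[measurable]: "X \<in> borel_measurable M" and Xi: "integrable M X" and X2: "integrable M (\<lambda>s. (X s)^2)"
    and j: "j \<in> {1..n}"
  shows "integrable M (\<lambda>s. X s + Bs j s - c)" "integrable M (\<lambda>s. (X s + Bs j s - c)^2)"
    "(\<lambda>s. X s + Bs j s - c) \<in> borel_measurable M"
proof -
  have [measurable]: "Bs j \<in> borel_measurable M" using Bsm[OF j] .
  show "integrable M (\<lambda>s. X s + Bs j s - c)" using Xi Bs_int[OF j] by simp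
  show "(\<lambda>s. X s + Bs j s - c) \<in> borel_measurable M" by measurable
  have "integrable M (\<lambda>s. 3 * ((X s)^2 + (Bs j s)^2 + c^2))"
    using X2 Bs_int2[OF j] by simp
  then show "integrable M (\<lambda>s. (X s + Bs j s - c)^2)"
  proof (rule Bochner_Integration.integrable_bound)
    show "(\<lambda>s. (X s + Bs j s - c)^2) \<in> borel_measurable M" by measurable
    show "AE x in M. norm ((X x + Bs j x - c)^2) \<le> norm (3 * ((X x)^2 + (Bs j x)^2 + c^2))"
    proof (rule AE_I2)
      fix x
      have "0 \<le> 3 * ((X x)^2 + (Bs j x)^2 + c^2)" by simp
      then show "norm ((X x + Bs j x - c)^2) \<le> norm (3 * ((X x)^2 + (Bs j x)^2 + c^2))"
        using sq3[of "X x" "Bs j x" c] by simp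
    qed
  qed
qed

lemma L2_max:
  fixes X :: "'a \<Rightarrow> real"
  assumes X[measurable]: "X \<in> borel_measurable M" and Xi: "integrable M X" and X2: "integrable M (\<lambda>s. (X s)^2)"
  shows "integrable M (\<lambda>s. max 0 (X s))" "integrable M (\<lambda>s. (max 0 (X s))^2)"
    "integrable M (\<lambda>s. max 0 (- X s))" "integrable M (\<lambda>s. (max 0 (- X s))^2)"
proof -
  have m1: "(\<lambda>s. (max 0 (X s))^2) \<in> borel_measurable M" by measurable
  have m2: "(\<lambda>s. (max 0 (- X s))^2) \<in> borel_measurable M" by measurable
  show "integrable M (\<lambda>s. max 0 (X s))" using Xi by (intro integrable_max) auto
  show "integrable M (\<lambda>s. max 0 (- X s))" using Xi by (intro integrable_max) auto
  show "integrable M (\<lambda>s. (max 0 (X s))^2)"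
    by (rule Bochner_Integration.integrable_bound[OF X2 m1]) (auto intro!: AE_I2 simp: maxsq)
  show "integrable M (\<lambda>s. (max 0 (- X s))^2)"
    by (rule Bochner_Integration.integrable_bound[OF X2 m2]) (auto intro!: AE_I2 simp: maxsq)
qed

lemma W_props:
  "k \<le> n \<Longrightarrow> (\<lambda>s. wait_time \<tau> y (\<lambda>j. Bs j s) k) \<in> borel_measurable M
     \<and> integrable M (\<lambda>s. wait_time \<tau> y (\<lambda>j. Bs j s) k)
     \<and> integrable M (\<lambda>s. (wait_time \<tau> y (\<lambda>j. Bs j s) k)^2)"
proof (induction k)
  case 0 then show ?case by simp
next
  case (Suc k)
  show ?case
  proof (cases "k = 0")
    case True then show ?thesis by simp
  next
    case False
    then have j: "\<tau> k \<in> {1..n}" using Suc.prems tau_in[of k] by simp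
    have ih: "(\<lambda>s. wait_time \<tau> y (\<lambda>j. Bs j s) k) \<in> borel_measurable M"
       "integrable M (\<lambda>s. wait_time \<tau> y (\<lambda>j. Bs j s) k)"
       "integrable M (\<lambda>s. (wait_time \<tau> y (\<lambda>j. Bs j s) k)^2)" using Suc by auto
    note S = L2_step[OF ih j, of "y (\<tau> k)"]
    note T = L2_max[OF S(3) S(1) S(2)]
    have [measurable]: "Bs (\<tau> k) \<in> borel_measurable M" using Bsm[OF j] .
    show ?thesis using False T(1,2) S(3) ih(1) by simp
  qed
qed

lemma W_nonneg: "0 \<le> wait_time \<tau> y b k"
  by (cases k) auto

lemma W_indep:
  assumes k: "k \<in> {1..n}"
  shows "M.indep_var borel (\<lambda>s. wait_time \<tau> y (\<lambda>j. Bs j s) k) borel (Bs (\<tau> k))"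
proof -
  define A where "A = \<tau> ` {1..<k}"
  have inj: "inj_on \<tau> {1..n}" using perm permutes_inj_on by blast
  have A1: "A \<subseteq> {1..n}"
  proof
    fix x assume "x \<in> A"
    then obtain j where j: "j \<in> {1..<k}" "x = \<tau> j" unfolding A_def by blast
    then have "j \<in> {1..n}" using k by simp
    then show "x \<in> {1..n}" using tau_in j(2) by blast
  qed
  have A2: "{\<tau> k} \<subseteq> {1..n}" using tau_in[OF k] by simp
  have A3: "A \<inter> {\<tau> k} = {}"
  proof -
    have "\<tau> k \<notin> A"
    proof
      assume "\<tau> k \<in> A"
      then obtain j where j: "j \<in> {1..<k}" "\<tau> j = \<tau> k" unfolding A_def by auto
      have "j \<in> {1..n}" using j(1) k by simp
      then have "j = k" using inj_onD[OF inj j(2)] k by blast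
      then show False using j by simp
    qed
    then show ?thesis by simp
  qed
  have iv: "M.indep_var (PiM A (\<lambda>_. borel)) (\<lambda>s. restrict (\<lambda>i. Bs i s) A)
                      (PiM {\<tau> k} (\<lambda>_. borel)) (\<lambda>s. restrict (\<lambda>i. Bs i s) {\<tau> k})"
    using M.indep_var_restrict[OF ind A3 A1 A2] .
  have m1: "(\<lambda>f. wait_time \<tau> y f k) \<in> borel_measurable (PiM A (\<lambda>_. borel))"
    by (rule wait_meas_pi) (simp add: A_def)
  have m2: "(\<lambda>f. f (\<tau> k)) \<in> borel_measurable (PiM {\<tau> k} (\<lambda>_. borel))"
    by (rule measurable_component_singleton) simp
  have iv2: "M.indep_var borel ((\<lambda>f. wait_time \<tau> y f k) \<circ> (\<lambda>s. restrict (\<lambda>i. Bs i s) A))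
     borel ((\<lambda>f. f (\<tau> k)) \<circ> (\<lambda>s. restrict (\<lambda>i. Bs i s) {\<tau> k}))"
    by (rule M.indep_var_compose[OF iv m1 m2])
  have e1: "((\<lambda>f. wait_time \<tau> y f k) \<circ> (\<lambda>s. restrict (\<lambda>i. Bs i s) A)) = (\<lambda>s. wait_time \<tau> y (\<lambda>j. Bs j s) k)"
  proof
    fix s
    show "((\<lambda>f. wait_time \<tau> y f k) \<circ> (\<lambda>s. restrict (\<lambda>i. Bs i s) A)) s = wait_time \<tau> y (\<lambda>j. Bs j s) k"
      unfolding comp_def by (rule wait_cong) (simp add: A_def)
  qed
  have e2: "((\<lambda>f. f (\<tau> k)) \<circ> (\<lambda>s. restrict (\<lambda>i. Bs i s) {\<tau> k})) = Bs (\<tau> k)" by (rule ext) simp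
  show ?thesis using iv2 unfolding e1 e2 .
qed

end
end

context appt begin

definition Nstar :: "real \<Rightarrow> real \<Rightarrow> real" where
  "Nstar q \<omega> = \<omega> * integral\<^sup>L N (\<lambda>s. max 0 (- (B s - q))) + (1 - \<omega>) * integral\<^sup>L N (\<lambda>s. max 0 (B s - q))"

lemma max_scale: "0 < (c::real) \<Longrightarrow> max 0 (c * t) = c * max 0 t"
  using mult_pos_neg[of c t] mult_nonneg_nonneg[of c t] by (auto simp: max_def)

lemma Nstar_scaled:
  assumes j: "j \<in> {1..n}"
  shows "integral\<^sup>L M (\<lambda>s. \<omega> * max 0 (- (Bs j s - \<mu> j - \<sigma> j * q)) + (1 - \<omega>) * max 0 (Bs j s - \<mu> j - \<sigma> j * q))
         = \<sigma> j * Nstar q \<omega>"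
proof -
  have sj: "0 < \<sigma> j" using sp[OF j] .
  have g: "(\<lambda>u. \<omega> * max 0 (- (u - \<mu> j - \<sigma> j * q)) + (1 - \<omega>) * max 0 (u - \<mu> j - \<sigma> j * q)) \<in> borel_measurable borel"
    by measurable
  have "integral\<^sup>L M (\<lambda>s. \<omega> * max 0 (- (Bs j s - \<mu> j - \<sigma> j * q)) + (1 - \<omega>) * max 0 (Bs j s - \<mu> j - \<sigma> j * q))
     = integral\<^sup>L N (\<lambda>s. \<omega> * max 0 (- (\<mu> j + \<sigma> j * B s - \<mu> j - \<sigma> j * q)) + (1 - \<omega>) * max 0 (\<mu> j + \<sigma> j * B s - \<mu> j - \<sigma> j * q))"
    using tr_int[OF j g] by simp
  also have "\<dots> = integral\<^sup>L N (\<lambda>s. \<sigma> j * (\<omega> * max 0 (- (B s - q)) + (1 - \<omega>) * max 0 (B s - q)))"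
  proof (rule Bochner_Integration.integral_cong[OF refl])
    fix s
    have e1: "\<mu> j + \<sigma> j * B s - \<mu> j - \<sigma> j * q = \<sigma> j * (B s - q)" by (simp add: algebra_simps)
    have e2: "- (\<sigma> j * (B s - q)) = \<sigma> j * (- (B s - q))" by (rule mult_minus_right[symmetric])
    show "\<omega> * max 0 (- (\<mu> j + \<sigma> j * B s - \<mu> j - \<sigma> j * q)) + (1 - \<omega>) * max 0 (\<mu> j + \<sigma> j * B s - \<mu> j - \<sigma> j * q)
        = \<sigma> j * (\<omega> * max 0 (- (B s - q)) + (1 - \<omega>) * max 0 (B s - q))"
      unfolding e1 e2 max_scale[OF sj] by (simp add: algebra_simps)
  qed
  also have "\<dots> = \<sigma> j * integral\<^sup>L N (\<lambda>s. \<omega> * max 0 (- (B s - q)) + (1 - \<omega>) * max 0 (B s - q))"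
    by simp
  also have "integral\<^sup>L N (\<lambda>s. \<omega> * max 0 (- (B s - q)) + (1 - \<omega>) * max 0 (B s - q)) = Nstar q \<omega>"
  proof -
    have i1: "integrable N (\<lambda>s. max 0 (- (B s - q)))" using B_int by (intro integrable_max) auto
    have i2: "integrable N (\<lambda>s. max 0 (B s - q))" using B_int by (intro integrable_max) auto
    show ?thesis unfolding Nstar_def using i1 i2 by simp
  qed
  finally show ?thesis .
qed

lemma G_int:
  assumes j: "j \<in> {1..n}"
  shows "integrable M (\<lambda>s. if Bs j s - \<mu> j - \<sigma> j * q \<le> 0 then \<omega> else \<omega> - 1)"
    "integral\<^sup>L M (\<lambda>s. if Bs j s - \<mu> j - \<sigma> j * q \<le> 0 then \<omega> else \<omega> - 1) = \<omega> - 1 + measure N {s\<in>space N. B s \<le> q}"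
    "integrable M (\<lambda>s. if Bs j s - \<mu> j - \<sigma> j * q < 0 then \<omega> else \<omega> - 1)"
    "integral\<^sup>L M (\<lambda>s. if Bs j s - \<mu> j - \<sigma> j * q < 0 then \<omega> else \<omega> - 1) = \<omega> - 1 + measure N {s\<in>space N. B s < q}"
proof -
  have sj: "0 < \<sigma> j" using sp[OF j] .
  have [measurable]: "Bs j \<in> borel_measurable M" using Bsm[OF j] .
  have c1: "(\<mu> j + \<sigma> j * b - \<mu> j - \<sigma> j * q \<le> 0) = (b \<le> q)" for b
  proof -
    have "\<mu> j + \<sigma> j * b - \<mu> j - \<sigma> j * q = \<sigma> j * (b - q)" by (simp add: algebra_simps)
    then show ?thesis using sj by (simp add: mult_le_0_iff)
  qed
  have c2: "(\<mu> j + \<sigma> j * b - \<mu> j - \<sigma> j * q < 0) = (b < q)" for b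
  proof -
    have "\<mu> j + \<sigma> j * b - \<mu> j - \<sigma> j * q = \<sigma> j * (b - q)" by (simp add: algebra_simps)
    then show ?thesis using sj by (simp add: mult_less_0_iff)
  qed
  show "integrable M (\<lambda>s. if Bs j s - \<mu> j - \<sigma> j * q \<le> 0 then \<omega> else \<omega> - 1)"
    by (rule M.integrable_const_bound[where B="\<bar>\<omega>\<bar> + 1"]) auto
  show "integrable M (\<lambda>s. if Bs j s - \<mu> j - \<sigma> j * q < 0 then \<omega> else \<omega> - 1)"
    by (rule M.integrable_const_bound[where B="\<bar>\<omega>\<bar> + 1"]) auto
  have g1: "(\<lambda>u. if u - \<mu> j - \<sigma> j * q \<le> 0 then \<omega> else \<omega> - 1) \<in> borel_measurable borel" by measurable
  have g2: "(\<lambda>u. if u - \<mu> j - \<sigma> j * q < 0 then \<omega> else \<omega> - 1) \<in> borel_measurable borel" by measurable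
  have A1: "{s\<in>space N. B s \<le> q} \<in> sets N" by measurable
  have A2: "{s\<in>space N. B s < q} \<in> sets N" by measurable
  have "integral\<^sup>L M (\<lambda>s. if Bs j s - \<mu> j - \<sigma> j * q \<le> 0 then \<omega> else \<omega> - 1)
      = integral\<^sup>L N (\<lambda>s. if \<mu> j + \<sigma> j * B s - \<mu> j - \<sigma> j * q \<le> 0 then \<omega> else \<omega> - 1)"
    using tr_int[OF j g1] by simp
  also have "\<dots> = integral\<^sup>L N (\<lambda>s. if B s \<le> q then \<omega> else \<omega> - 1)"
    unfolding c1 ..
  also have "\<dots> = integral\<^sup>L N (\<lambda>s. (\<omega> - 1) + indicator {s\<in>space N. B s \<le> q} s)"
    by (rule Bochner_Integration.integral_cong) (auto simp: indicator_def)
  also have "\<dots> = \<omega> - 1 + measure N {s\<in>space N. B s \<le> q}"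
    using A1 by (subst Bochner_Integration.integral_add) (auto simp: N.prob_space Int_absorb2 sets.sets_into_space intro!: integrable_real_indicator N.emeasure_finite[THEN top.not_eq_extremum[THEN iffD1]])
  finally show "integral\<^sup>L M (\<lambda>s. if Bs j s - \<mu> j - \<sigma> j * q \<le> 0 then \<omega> else \<omega> - 1) = \<omega> - 1 + measure N {s\<in>space N. B s \<le> q}" .
  have "integral\<^sup>L M (\<lambda>s. if Bs j s - \<mu> j - \<sigma> j * q < 0 then \<omega> else \<omega> - 1)
      = integral\<^sup>L N (\<lambda>s. if \<mu> j + \<sigma> j * B s - \<mu> j - \<sigma> j * q < 0 then \<omega> else \<omega> - 1)"
    using tr_int[OF j g2] by simp
  also have "\<dots> = integral\<^sup>L N (\<lambda>s. if B s < q then \<omega> else \<omega> - 1)"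
    unfolding c2 ..
  also have "\<dots> = integral\<^sup>L N (\<lambda>s. (\<omega> - 1) + indicator {s\<in>space N. B s < q} s)"
    by (rule Bochner_Integration.integral_cong) (auto simp: indicator_def)
  also have "\<dots> = \<omega> - 1 + measure N {s\<in>space N. B s < q}"
    using A2 by (subst Bochner_Integration.integral_add) (auto simp: N.prob_space Int_absorb2 sets.sets_into_space intro!: integrable_real_indicator N.emeasure_finite[THEN top.not_eq_extremum[THEN iffD1]])
  finally show "integral\<^sup>L M (\<lambda>s. if Bs j s - \<mu> j - \<sigma> j * q < 0 then \<omega> else \<omega> - 1) = \<omega> - 1 + measure N {s\<in>space N. B s < q}" .
qed

lemma slot_lb:
  assumes perm: "\<tau> permutes {1..n}" and k: "1 \<le> k" "k < n" and om: "0 \<le> \<omega>" "\<omega> \<le> 1"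
    and Fq: "1 - \<omega> \<le> measure N {s\<in>space N. B s \<le> q}"
    and Fq': "measure N {s\<in>space N. B s < q} \<le> 1 - \<omega>"
  shows "\<sigma> (\<tau> k) * Nstar q \<omega> \<le> \<omega> * integral\<^sup>L M (\<lambda>s. idle_time \<tau> y (\<lambda>j. Bs j s) (Suc k))
          + (1 - \<omega>) * integral\<^sup>L M (\<lambda>s. wait_time \<tau> y (\<lambda>j. Bs j s) (Suc k))"
proof -
  define j where "j = \<tau> k"
  have j: "j \<in> {1..n}" using tau_in[OF perm, of k] k unfolding j_def by simp
  define V where "V s = wait_time \<tau> y (\<lambda>j. Bs j s) k" for s
  have Vp: "V \<in> borel_measurable M" "integrable M V" "integrable M (\<lambda>s. (V s)^2)"
    using W_props[OF perm, of k] k unfolding V_def by auto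
  have [measurable]: "Bs j \<in> borel_measurable M" using Bsm[OF j] .
  have [measurable]: "V \<in> borel_measurable M" using Vp(1) .
  define c0 where "c0 = y j - \<mu> j - \<sigma> j * q"
  define r where "r s = Bs j s - \<mu> j - \<sigma> j * q" for s
  define d where "d s = c0 - V s" for s
  have rd: "r s - d s = V s + Bs j s - y j" for s by (simp add: r_def d_def c0_def)
  have k0: "k \<noteq> 0" using k by simp
  have Wk: "wait_time \<tau> y (\<lambda>j. Bs j s) (Suc k) = max 0 (r s - d s)" for s
    unfolding rd using k0 by (simp add: V_def j_def)
  have Ik: "idle_time \<tau> y (\<lambda>j. Bs j s) (Suc k) = max 0 (- (r s - d s))" for s
    unfolding rd using k0 by (simp add: V_def j_def)
  note S = L2_step[OF perm Vp j, of "y j"]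
  note T = L2_max[OF perm S(3) S(1) S(2)]
  have iW: "integrable M (\<lambda>s. max 0 (r s - d s))" unfolding rd using T(1) .
  have iI: "integrable M (\<lambda>s. max 0 (- (r s - d s)))" unfolding rd using T(3) .
  have id: "integrable M d" unfolding d_def using Vp(2) by simp
  have pd1: "integrable M (\<lambda>s. max 0 (d s))" using id by (intro integrable_max) auto
  have pd2: "integrable M (\<lambda>s. max 0 (- d s))" using id by (intro integrable_max) auto
  define G1 where "G1 s = (if Bs j s - \<mu> j - \<sigma> j * q \<le> 0 then \<omega> else \<omega> - 1)" for s
  define G2 where "G2 s = (if Bs j s - \<mu> j - \<sigma> j * q < 0 then \<omega> else \<omega> - 1)" for s
  note GI = G_int[OF j, of q \<omega>]
  have iG1: "integrable M G1" using GI(1) unfolding G1_def .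
  have iG2: "integrable M G2" using GI(3) unfolding G2_def .
  have EG1: "integral\<^sup>L M G1 \<ge> 0" using GI(2) Fq unfolding G1_def by simp
  have EG2: "integral\<^sup>L M G2 \<le> 0" using GI(4) Fq' unfolding G2_def by simp
  have ind0: "M.indep_var borel V borel (Bs j)"
    using W_indep[OF perm, of k] k unfolding V_def j_def by simp
  have mY1: "(\<lambda>v. max 0 (c0 - v)) \<in> borel_measurable borel" by measurable
  have mY1': "(\<lambda>v. max 0 (- (c0 - v))) \<in> borel_measurable borel" by measurable
  have mY2: "(\<lambda>u. if u - \<mu> j - \<sigma> j * q \<le> 0 then \<omega> else \<omega> - 1) \<in> borel_measurable borel" by measurable
  have mY3: "(\<lambda>u. if u - \<mu> j - \<sigma> j * q < 0 then \<omega> else \<omega> - 1) \<in> borel_measurable borel" by measurable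
  have ind1: "M.indep_var borel (\<lambda>s. max 0 (d s)) borel G1"
    using M.indep_var_compose[OF ind0 mY1 mY2] unfolding comp_def d_def G1_def .
  have ind2: "M.indep_var borel (\<lambda>s. max 0 (- d s)) borel G2"
    using M.indep_var_compose[OF ind0 mY1' mY3] unfolding comp_def d_def G2_def .
  have P1: "integral\<^sup>L M (\<lambda>s. max 0 (d s) * G1 s) = integral\<^sup>L M (\<lambda>s. max 0 (d s)) * integral\<^sup>L M G1"
    by (rule M.indep_var_lebesgue_integral[OF ind1 pd1 iG1])
  have P1i: "integrable M (\<lambda>s. max 0 (d s) * G1 s)"
    by (rule M.indep_var_integrable[OF ind1 pd1 iG1])
  have P2: "integral\<^sup>L M (\<lambda>s. max 0 (- d s) * G2 s) = integral\<^sup>L M (\<lambda>s. max 0 (- d s)) * integral\<^sup>L M G2"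
    by (rule M.indep_var_lebesgue_integral[OF ind2 pd2 iG2])
  have P2i: "integrable M (\<lambda>s. max 0 (- d s) * G2 s)"
    by (rule M.indep_var_integrable[OF ind2 pd2 iG2])
  have E1: "integral\<^sup>L M (\<lambda>s. max 0 (d s) * G1 s) \<ge> 0"
    unfolding P1 using EG1 by (simp add: integral_nonneg_AE)
  have E2: "integral\<^sup>L M (\<lambda>s. max 0 (- d s) * G2 s) \<le> 0"
    unfolding P2 using EG2 by (simp add: integral_nonneg_AE mult_nonneg_nonpos)
  define H where "H s = \<omega> * max 0 (- r s) + (1 - \<omega>) * max 0 (r s)" for s
  have HN: "integral\<^sup>L M H = \<sigma> j * Nstar q \<omega>"
    using Nstar_scaled[OF j, of \<omega> q] unfolding H_def r_def .
  have iH: "integrable M H"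
  proof -
    have ir: "integrable M r" unfolding r_def using Bs_int[OF j] by simp
    show ?thesis unfolding H_def using ir by (intro Bochner_Integration.integrable_add integrable_mult_right integrable_max) auto
  qed
  have "\<sigma> j * Nstar q \<omega> \<le> integral\<^sup>L M H + integral\<^sup>L M (\<lambda>s. max 0 (d s) * G1 s) - integral\<^sup>L M (\<lambda>s. max 0 (- d s) * G2 s)"
    using HN E1 E2 by simp
  also have "\<dots> = integral\<^sup>L M (\<lambda>s. H s + max 0 (d s) * G1 s - max 0 (- d s) * G2 s)"
    using iH P1i P2i by simp
  also have "\<dots> \<le> integral\<^sup>L M (\<lambda>s. \<omega> * max 0 (- (r s - d s)) + (1 - \<omega>) * max 0 (r s - d s))"
  proof (rule integral_mono)
    show "integrable M (\<lambda>s. H s + max 0 (d s) * G1 s - max 0 (- d s) * G2 s)"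
      using iH P1i P2i by simp
    show "integrable M (\<lambda>s. \<omega> * max 0 (- (r s - d s)) + (1 - \<omega>) * max 0 (r s - d s))"
      using iI iW by simp
    fix s
    show "H s + max 0 (d s) * G1 s - max 0 (- d s) * G2 s \<le> \<omega> * max 0 (- (r s - d s)) + (1 - \<omega>) * max 0 (r s - d s)"
      using subgrad[OF om, of "r s" "d s"] unfolding H_def G1_def G2_def r_def by simp
  qed
  also have "\<dots> = \<omega> * integral\<^sup>L M (\<lambda>s. idle_time \<tau> y (\<lambda>j. Bs j s) (Suc k))
          + (1 - \<omega>) * integral\<^sup>L M (\<lambda>s. wait_time \<tau> y (\<lambda>j. Bs j s) (Suc k))"
    unfolding Wk Ik using iI iW by simp
  finally show ?thesis unfolding j_def .
qed

end

lemma sq_int_le: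
  fixes X :: "'a \<Rightarrow> real"
  assumes P: "prob_space M" and [measurable]: "X \<in> borel_measurable M" and i1: "integrable M X" and i2: "integrable M (\<lambda>s. (X s)^2)"
  shows "(integral\<^sup>L M X)^2 \<le> integral\<^sup>L M (\<lambda>s. (X s)^2)"
proof -
  interpret prob_space M by (rule P)
  define c where "c = integral\<^sup>L M X"
  have "0 \<le> integral\<^sup>L M (\<lambda>s. (X s - c)^2)" by (rule integral_nonneg_AE) auto
  also have "integral\<^sup>L M (\<lambda>s. (X s - c)^2) = integral\<^sup>L M (\<lambda>s. (X s)^2 - 2 * c * X s + c^2)"
    by (simp add: power2_eq_square algebra_simps)
  also have "\<dots> = integral\<^sup>L M (\<lambda>s. (X s)^2) - 2 * c * c + c^2"
    using i1 i2 by (simp add: c_def prob_space)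
  finally show ?thesis unfolding c_def by (simp add: power2_eq_square)
qed

lemma sum_shift1:
  fixes f :: "nat \<Rightarrow> real"
  assumes f1: "f 1 = 0" and n: "1 \<le> n"
  shows "(\<Sum>i=1..n. f i) = (\<Sum>k=1..n-1. f (Suc k))"
proof -
  obtain m where m: "n = Suc m" using n by (cases n) auto
  have "sum f {Suc 0..Suc m} = sum (\<lambda>i. f (Suc i)) {0..m}" by (rule sum.shift_bounds_cl_Suc_ivl)
  also have "\<dots> = f (Suc 0) + sum (\<lambda>i. f (Suc i)) {Suc 0..m}" by (rule sum.atLeast_Suc_atMost) simp
  finally show ?thesis using f1 m by simp
qed

context appt begin

definition Wid :: "real \<Rightarrow> nat \<Rightarrow> 'a \<Rightarrow> real" where
  "Wid \<alpha> k s = wait_time id (\<lambda>i. \<mu> i + \<alpha> * \<sigma> i) (\<lambda>j. Bs j s) k"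
definition Iid :: "real \<Rightarrow> nat \<Rightarrow> 'a \<Rightarrow> real" where
  "Iid \<alpha> k s = idle_time id (\<lambda>i. \<mu> i + \<alpha> * \<sigma> i) (\<lambda>j. Bs j s) k"

lemma id_perm: "id permutes {1..n}" by (rule permutes_id)

lemma Wid_props: "k \<le> n \<Longrightarrow> Wid \<alpha> k \<in> borel_measurable M \<and> integrable M (Wid \<alpha> k) \<and> integrable M (\<lambda>s. (Wid \<alpha> k s)^2)"
  using W_props[OF id_perm, where y="\<lambda>i. \<mu> i + \<alpha> * \<sigma> i" and k=k] unfolding Wid_def[abs_def] by simp

lemma id_step:
  assumes k: "1 \<le> k" "k < n"
  shows "integral\<^sup>L M (Wid \<alpha> (Suc k)) - integral\<^sup>L M (Iid \<alpha> (Suc k)) = integral\<^sup>L M (Wid \<alpha> k) - \<alpha> * \<sigma> k"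
    "integral\<^sup>L M (\<lambda>s. (Wid \<alpha> (Suc k) s)^2) + integral\<^sup>L M (\<lambda>s. (Iid \<alpha> (Suc k) s)^2)
       = integral\<^sup>L M (\<lambda>s. (Wid \<alpha> k s)^2) - 2 * \<alpha> * \<sigma> k * integral\<^sup>L M (Wid \<alpha> k) + (\<sigma> k)^2 * (1 + \<alpha>^2)"
    "(integral\<^sup>L M (Iid \<alpha> (Suc k)))^2 \<le> integral\<^sup>L M (\<lambda>s. (Iid \<alpha> (Suc k) s)^2)"
proof -
  have j: "k \<in> {1..n}" using k by simp
  define xk where "xk = \<mu> k + \<alpha> * \<sigma> k"
  define V where "V = Wid \<alpha> k"
  have Vp: "V \<in> borel_measurable M" "integrable M V" "integrable M (\<lambda>s. (V s)^2)"
    using Wid_props[of k \<alpha>] k unfolding V_def by auto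
  have [measurable]: "Bs k \<in> borel_measurable M" using Bsm[OF j] .
  have [measurable]: "V \<in> borel_measurable M" using Vp(1) .
  define Z where "Z s = Bs k s - xk" for s
  have k0: "k \<noteq> 0" using k by simp
  have Wk: "Wid \<alpha> (Suc k) s = max 0 (V s + Bs k s - xk)" for s
    using k0 by (simp add: V_def Wid_def xk_def)
  have Ik: "Iid \<alpha> (Suc k) s = max 0 (- (V s + Bs k s - xk))" for s
    using k0 by (simp add: V_def Wid_def Iid_def xk_def)
  note S = L2_step[OF id_perm Vp j, of xk]
  note T = L2_max[OF id_perm S(3) S(1) S(2)]
  have EZ: "integral\<^sup>L M Z = - \<alpha> * \<sigma> k"
  proof -
    have g: "(\<lambda>u::real. u - xk) \<in> borel_measurable borel" by measurable
    have "integral\<^sup>L M Z = integral\<^sup>L N (\<lambda>s. \<mu> k + \<sigma> k * B s - xk)"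
      using tr_int[OF j g] unfolding Z_def by simp
    also have "\<dots> = \<mu> k + \<sigma> k * integral\<^sup>L N B - xk"
      using B_int by (simp add: N.prob_space)
    finally show ?thesis using EB unfolding xk_def by simp
  qed
  have iZ: "integrable M Z" unfolding Z_def using Bs_int[OF j] by simp
  have EZ2: "integral\<^sup>L M (\<lambda>s. (Z s)^2) = (\<sigma> k)^2 * (1 + \<alpha>^2)"
  proof -
    have g: "(\<lambda>u::real. (u - xk)^2) \<in> borel_measurable borel" by measurable
    have "integral\<^sup>L M (\<lambda>s. (Z s)^2) = integral\<^sup>L N (\<lambda>s. (\<mu> k + \<sigma> k * B s - xk)^2)"
      using tr_int[OF j g] unfolding Z_def by simp
    also have "\<dots> = integral\<^sup>L N (\<lambda>s. (\<sigma> k)^2 * (B s)^2 - (2 * \<alpha> * (\<sigma> k)^2) * B s + (\<alpha> * \<sigma> k)^2)"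
      unfolding xk_def by (rule Bochner_Integration.integral_cong) (auto simp: power2_eq_square algebra_simps)
    also have "\<dots> = (\<sigma> k)^2 * integral\<^sup>L N (\<lambda>s. (B s)^2) - (2 * \<alpha> * (\<sigma> k)^2) * integral\<^sup>L N B + (\<alpha> * \<sigma> k)^2"
      using B_int B2 by (simp add: N.prob_space)
    finally show ?thesis using EB EB2 by (simp add: power2_eq_square algebra_simps)
  qed
  have iZ2: "integrable M (\<lambda>s. (Z s)^2)"
  proof -
    have "integrable M (\<lambda>s. (Bs k s)^2 - 2 * xk * Bs k s + xk^2)"
      using Bs_int[OF j] Bs_int2[OF j] by simp
    then show ?thesis unfolding Z_def by (simp add: power2_eq_square algebra_simps)
  qed
  have indZ: "M.indep_var borel V borel Z"
  proof -
    have ind0: "M.indep_var borel V borel (Bs k)"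
      using W_indep[OF id_perm j, where y="\<lambda>i. \<mu> i + \<alpha> * \<sigma> i"] unfolding V_def Wid_def[abs_def] by simp
    have m1: "(\<lambda>v::real. v) \<in> borel_measurable borel" by simp
    have m2: "(\<lambda>u::real. u - xk) \<in> borel_measurable borel" by measurable
    show ?thesis using M.indep_var_compose[OF ind0 m1 m2] unfolding comp_def Z_def by simp
  qed
  have EVZ: "integral\<^sup>L M (\<lambda>s. V s * Z s) = integral\<^sup>L M V * (- \<alpha> * \<sigma> k)"
    using M.indep_var_lebesgue_integral[OF indZ Vp(2) iZ] EZ by simp
  have iVZ: "integrable M (\<lambda>s. V s * Z s)" using M.indep_var_integrable[OF indZ Vp(2) iZ] .
  have X: "V s + Bs k s - xk = V s + Z s" for s unfolding Z_def by simp
  show "integral\<^sup>L M (Wid \<alpha> (Suc k)) - integral\<^sup>L M (Iid \<alpha> (Suc k)) = integral\<^sup>L M (Wid \<alpha> k) - \<alpha> * \<sigma> k"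
  proof -
    have "integral\<^sup>L M (Wid \<alpha> (Suc k)) - integral\<^sup>L M (Iid \<alpha> (Suc k))
        = integral\<^sup>L M (\<lambda>s. max 0 (V s + Bs k s - xk) - max 0 (- (V s + Bs k s - xk)))"
      unfolding Wk[abs_def] Ik[abs_def] using T(1) T(3) by simp
    also have "\<dots> = integral\<^sup>L M (\<lambda>s. V s + Z s)"
      by (rule Bochner_Integration.integral_cong) (auto simp: Z_def max_def)
    also have "\<dots> = integral\<^sup>L M V - \<alpha> * \<sigma> k" using Vp(2) iZ EZ by simp
    finally show ?thesis unfolding V_def .
  qed
  show "integral\<^sup>L M (\<lambda>s. (Wid \<alpha> (Suc k) s)^2) + integral\<^sup>L M (\<lambda>s. (Iid \<alpha> (Suc k) s)^2)
       = integral\<^sup>L M (\<lambda>s. (Wid \<alpha> k s)^2) - 2 * \<alpha> * \<sigma> k * integral\<^sup>L M (Wid \<alpha> k) + (\<sigma> k)^2 * (1 + \<alpha>^2)"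
  proof -
    have "integral\<^sup>L M (\<lambda>s. (Wid \<alpha> (Suc k) s)^2) + integral\<^sup>L M (\<lambda>s. (Iid \<alpha> (Suc k) s)^2)
        = integral\<^sup>L M (\<lambda>s. (max 0 (V s + Bs k s - xk))^2 + (max 0 (- (V s + Bs k s - xk)))^2)"
      unfolding Wk Ik using T(2) T(4) by simp
    also have "\<dots> = integral\<^sup>L M (\<lambda>s. (V s)^2 + 2 * (V s * Z s) + (Z s)^2)"
      by (rule Bochner_Integration.integral_cong) (auto simp: Z_def max_def power2_eq_square algebra_simps)
    also have "\<dots> = integral\<^sup>L M (\<lambda>s. (V s)^2) + 2 * integral\<^sup>L M (\<lambda>s. V s * Z s) + integral\<^sup>L M (\<lambda>s. (Z s)^2)"
      using Vp(3) iVZ iZ2 by simp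
    finally have eq: "integral\<^sup>L M (\<lambda>s. (Wid \<alpha> (Suc k) s)^2) + integral\<^sup>L M (\<lambda>s. (Iid \<alpha> (Suc k) s)^2)
       = integral\<^sup>L M (\<lambda>s. (V s)^2) + 2 * integral\<^sup>L M (\<lambda>s. V s * Z s) + integral\<^sup>L M (\<lambda>s. (Z s)^2)" .
    show ?thesis unfolding V_def[symmetric] eq EVZ EZ2 by (simp add: algebra_simps)
  qed
  show "(integral\<^sup>L M (Iid \<alpha> (Suc k)))^2 \<le> integral\<^sup>L M (\<lambda>s. (Iid \<alpha> (Suc k) s)^2)"
  proof -
    have m: "Iid \<alpha> (Suc k) \<in> borel_measurable M" unfolding Ik[abs_def] by measurable
    show ?thesis using sq_int_le[OF PM m] T(3) T(4) unfolding Ik[abs_def] by simp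
  qed
qed

lemma id_cost_ub:
  assumes n2: "n \<ge> 2" and om: "0 < \<omega>" "\<omega> < 1"
    and mono: "\<And>i j. 1 \<le> i \<Longrightarrow> i \<le> j \<Longrightarrow> j \<le> n \<Longrightarrow> \<sigma> i \<le> \<sigma> j"
    and S_def: "S = (\<Sum>i=1..n-1. \<sigma> i)"
    and al: "\<alpha> = sqrt ((1 - \<omega>) / (2 * \<omega>) + \<sigma> (n - 1) / (2 * S))"
  shows "appt_cost M Bs n id (\<lambda>i. \<mu> i + \<alpha> * \<sigma> i) \<omega> \<le> sqrt (2 * \<omega>) * S"
proof -
  define a where "a k = integral\<^sup>L M (Wid \<alpha> k)" for k
  define b where "b k = integral\<^sup>L M (\<lambda>s. (Wid \<alpha> k s)^2)" for k
  define e where "e k = integral\<^sup>L M (Iid \<alpha> k)" for k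
  define f where "f k = integral\<^sup>L M (\<lambda>s. (Iid \<alpha> k s)^2)" for k
  define m where "m = n - 1"
  have m1: "1 \<le> m" using n2 unfolding m_def by simp
  have nm: "n = Suc m" using n2 unfolding m_def by simp
  have c_pos: "0 < \<sigma> (n-1)" using sp[of "n-1"] n2 by simp
  have c_le: "\<sigma> (n-1) \<le> S" unfolding S_def
  proof (rule member_le_sum)
    show "n - 1 \<in> {1..n-1}" using n2 by simp
    show "\<And>x. x \<in> {1..n - 1} - {n - 1} \<Longrightarrow> 0 \<le> \<sigma> x" using sp by (auto intro: less_imp_le)
  qed simp
  have S_pos: "0 < S" using c_pos c_le by simp
  have al_pos: "0 < \<alpha>" unfolding al using om S_pos c_pos by (intro real_sqrt_gt_zero add_pos_pos) auto
  have W1: "Wid \<alpha> 1 s = 0" for s by (simp add: Wid_def)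
  have I1: "Iid \<alpha> 1 s = 0" for s by (simp add: Iid_def)
  have a1: "a 1 = 0" and b1: "b 1 = 0" and e1: "e 1 = 0" unfolding a_def b_def e_def W1 I1 by simp_all
  have bnn: "0 \<le> b i" for i unfolding b_def by (rule integral_nonneg_AE) auto
  have ann: "0 \<le> a i" for i unfolding a_def Wid_def by (rule integral_nonneg_AE) (auto simp: W_nonneg)
  have st: "1 \<le> i \<Longrightarrow> i \<le> m \<Longrightarrow> a (Suc i) - e (Suc i) = a i - \<alpha> * \<sigma> i
      \<and> b (Suc i) + f (Suc i) = b i - 2*\<alpha>*\<sigma> i*a i + (\<sigma> i)^2*(1+\<alpha>^2)
      \<and> (e (Suc i))^2 \<le> f (Suc i)" for i
    using id_step[of i \<alpha>] unfolding m_def a_def b_def e_def f_def by auto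
  have K: "2*\<alpha>*(\<Sum>i=2..Suc (Suc (m-1)). a i) + b (Suc (Suc (m-1))) / \<sigma> (Suc (m-1)) \<le> (\<Sum>i=1..Suc (m-1). \<sigma> i)"
  proof (rule kseq[of \<alpha> m \<sigma> a e b f])
    show "0 < \<alpha>" by (rule al_pos)
    show "\<And>i. 1 \<le> i \<Longrightarrow> i \<le> m \<Longrightarrow> 0 < \<sigma> i" using sp unfolding m_def by simp
    show "\<And>i. 1 \<le> i \<Longrightarrow> i < m \<Longrightarrow> \<sigma> i \<le> \<sigma> (Suc i)" using mono unfolding m_def by simp
    show "\<And>i. 1 \<le> i \<Longrightarrow> i \<le> m \<Longrightarrow> a (Suc i) - e (Suc i) = a i - \<alpha> * \<sigma> i" using st by blast
    show "\<And>i. 1 \<le> i \<Longrightarrow> i \<le> m \<Longrightarrow> b (Suc i) + f (Suc i) = b i - 2*\<alpha>*\<sigma> i*a i + (\<sigma> i)^2*(1+\<alpha>^2)" using st by blast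
    show "\<And>i. 1 \<le> i \<Longrightarrow> i \<le> m \<Longrightarrow> (e (Suc i))^2 \<le> f (Suc i)" using st by blast
    show "b 1 = 0" by (rule b1)
    show "\<And>i. 0 \<le> b i" by (rule bnn)
    show "m - 1 < m" using m1 by simp
  qed
  have sm: "Suc (m - 1) = m" using m1 by simp
  define T where "T = (\<Sum>i=2..n. a i)"
  have K2: "2 * \<alpha> * T + b n / \<sigma> (n-1) \<le> S"
    using K unfolding sm T_def S_def m_def[symmetric] nm[symmetric] by simp
  have wb: "(a n)^2 \<le> b n"
  proof -
    have p: "Wid \<alpha> n \<in> borel_measurable M" "integrable M (Wid \<alpha> n)" "integrable M (\<lambda>s. (Wid \<alpha> n s)^2)"
      using Wid_props[of n \<alpha>] by auto
    show ?thesis unfolding a_def b_def using sq_int_le[OF PM p] .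
  qed
  have con: "2 * \<alpha> * T + (a n)^2 / \<sigma> (n-1) \<le> S"
  proof -
    have "(a n)^2 / \<sigma> (n-1) \<le> b n / \<sigma> (n-1)" using wb c_pos by (intro divide_right_mono) auto
    then show ?thesis using K2 by simp
  qed
  have wT: "a n \<le> T" unfolding T_def
  proof (rule member_le_sum)
    show "n \<in> {2..n}" using n2 by simp
  qed (auto intro: ann)
  have sumA: "(\<Sum>i=1..n. a i) = T"
  proof -
    have "(\<Sum>i=1..n. a i) = a 1 + (\<Sum>i=Suc 1..n. a i)" using n2 by (intro sum.atLeast_Suc_atMost) simp
    then show ?thesis unfolding T_def using a1 by (simp add: numeral_2_eq_2)
  qed
  have sumE: "(\<Sum>i=1..n. e i) = a n + \<alpha> * S"
  proof -
    have "(\<Sum>i=1..n. e i) = (\<Sum>k=1..n-1. e (Suc k))" using e1 n2 by (intro sum_shift1) auto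
    also have "\<dots> = (\<Sum>k=1..n-1. (a (Suc k) - a k) + \<alpha> * \<sigma> k)"
    proof (rule sum.cong[OF refl])
      fix k assume "k \<in> {1..n-1}"
      then have "1 \<le> k" "k \<le> m" unfolding m_def by auto
      then show "e (Suc k) = (a (Suc k) - a k) + \<alpha> * \<sigma> k" using st[of k] by simp
    qed
    also have "\<dots> = (\<Sum>k=1..n-1. a (Suc k) - a k) + \<alpha> * S"
      unfolding S_def by (simp add: sum.distrib sum_distrib_left)
    also have "(\<Sum>k=1..n-1. a (Suc k) - a k) = a (Suc (n-1)) - a 1" by (rule sum_Suc_diff) simp
    also have "Suc (n - 1) = n" using n2 by simp
    finally show ?thesis using a1 by simp
  qed
  have cost: "appt_cost M Bs n id (\<lambda>i. \<mu> i + \<alpha> * \<sigma> i) \<omega> = \<omega> * (a n + \<alpha> * S) + (1 - \<omega>) * T"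
  proof -
    have "appt_cost M Bs n id (\<lambda>i. \<mu> i + \<alpha> * \<sigma> i) \<omega> = \<omega> * (\<Sum>i=1..n. e i) + (1 - \<omega>) * (\<Sum>i=1..n. a i)"
      unfolding appt_cost_def a_def e_def Wid_def[abs_def] Iid_def[abs_def] ..
    then show ?thesis unfolding sumA sumE .
  qed
  show ?thesis unfolding cost
    by (rule final_alg[OF om S_pos c_pos c_le al ann wT con])
qed

end

lemma sum_last: "1 \<le> (n::nat) \<Longrightarrow> (\<Sum>k=1..n. g k) = (\<Sum>k=1..n-1. g k) + (g n :: real)"
  by (cases n) auto

context appt begin

lemma Nstar_nonneg: "0 \<le> \<omega> \<Longrightarrow> \<omega> \<le> 1 \<Longrightarrow> 0 \<le> Nstar q \<omega>"
  unfolding Nstar_def by (intro add_nonneg_nonneg mult_nonneg_nonneg integral_nonneg_AE) auto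

lemma Nstar_pos:
  assumes om: "0 < \<omega>" "\<omega> < 1"
  shows "0 < Nstar q \<omega>"
proof -
  define h where "h s = \<omega> * max 0 (- (B s - q)) + (1 - \<omega>) * max 0 (B s - q)" for s
  have i1: "integrable N (\<lambda>s. max 0 (- (B s - q)))" using B_int by (intro integrable_max) auto
  have i2: "integrable N (\<lambda>s. max 0 (B s - q))" using B_int by (intro integrable_max) auto
  have ih: "integrable N h" unfolding h_def using i1 i2 by simp
  have Nh: "Nstar q \<omega> = integral\<^sup>L N h" unfolding Nstar_def h_def using i1 i2 by simp
  have hnn: "0 \<le> h s" for s unfolding h_def using om by (intro add_nonneg_nonneg mult_nonneg_nonneg) auto
  have h0: "h s = 0 \<Longrightarrow> B s = q" for s
  proof (rule ccontr)
    assume h: "h s = 0" and ne: "B s \<noteq> q"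
    show False
    proof (cases "B s < q")
      case True
      then have "0 < \<omega> * max 0 (- (B s - q))" using om by simp
      moreover have "0 \<le> (1 - \<omega>) * max 0 (B s - q)" using om by simp
      ultimately show False using h unfolding h_def by linarith
    next
      case False
      then have "B s > q" using ne by simp
      then have "0 < (1 - \<omega>) * max 0 (B s - q)" using om by simp
      moreover have "0 \<le> \<omega> * max 0 (- (B s - q))" using om by simp
      ultimately show False using h unfolding h_def by linarith
    qed
  qed
  show ?thesis
  proof (rule ccontr)
    assume "\<not> 0 < Nstar q \<omega>"
    then have "integral\<^sup>L N h = 0" using Nh Nstar_nonneg[of \<omega> q] om by simp
    moreover have ae: "AE s in N. 0 \<le> h s" by (rule AE_I2) (rule hnn)
    ultimately have "AE s in N. h s = 0" using integral_nonneg_eq_0_iff_AE[OF ih ae] by simp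
    then have AEq: "AE s in N. B s = q" by eventually_elim (rule h0)
    have "integral\<^sup>L N B = integral\<^sup>L N (\<lambda>s. q)" using AEq by (intro integral_cong_AE) auto
    then have q0: "q = 0" using EB by (simp add: N.prob_space)
    have "integral\<^sup>L N (\<lambda>s. (B s)^2) = integral\<^sup>L N (\<lambda>s. q^2)" using AEq by (intro integral_cong_AE) auto
    then show False using EB2 q0 by (simp add: N.prob_space)
  qed
qed

lemma cost_lb:
  assumes perm: "\<tau> permutes {1..n}" and n2: "n \<ge> 2" and om: "0 < \<omega>" "\<omega> < 1"
    and mono: "\<And>i j. 1 \<le> i \<Longrightarrow> i \<le> j \<Longrightarrow> j \<le> n \<Longrightarrow> \<sigma> i \<le> \<sigma> j"
    and Fq: "1 - \<omega> \<le> measure N {s\<in>space N. B s \<le> q}"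
    and Fq': "measure N {s\<in>space N. B s < q} \<le> 1 - \<omega>"
  shows "Nstar q \<omega> * (\<Sum>i=1..n-1. \<sigma> i) \<le> appt_cost M Bs n \<tau> y \<omega>"
proof -
  define Ii where "Ii k = integral\<^sup>L M (\<lambda>s. idle_time \<tau> y (\<lambda>j. Bs j s) k)" for k
  define Wi where "Wi k = integral\<^sup>L M (\<lambda>s. wait_time \<tau> y (\<lambda>j. Bs j s) k)" for k
  have I1: "Ii 1 = 0" unfolding Ii_def by simp
  have W1: "Wi 1 = 0" unfolding Wi_def by simp
  have n1: "1 \<le> n" using n2 by simp
  have "appt_cost M Bs n \<tau> y \<omega> = \<omega> * (\<Sum>i=1..n. Ii i) + (1 - \<omega>) * (\<Sum>i=1..n. Wi i)"
    unfolding appt_cost_def Ii_def Wi_def ..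
  also have "\<dots> = \<omega> * (\<Sum>k=1..n-1. Ii (Suc k)) + (1 - \<omega>) * (\<Sum>k=1..n-1. Wi (Suc k))"
    using sum_shift1[of Ii n, OF I1 n1] sum_shift1[of Wi n, OF W1 n1] by simp
  also have "\<dots> = (\<Sum>k=1..n-1. \<omega> * Ii (Suc k) + (1 - \<omega>) * Wi (Suc k))"
    by (simp add: sum.distrib sum_distrib_left)
  finally have C: "appt_cost M Bs n \<tau> y \<omega> = (\<Sum>k=1..n-1. \<omega> * Ii (Suc k) + (1 - \<omega>) * Wi (Suc k))" .
  have "(\<Sum>k=1..n-1. \<sigma> (\<tau> k) * Nstar q \<omega>) \<le> (\<Sum>k=1..n-1. \<omega> * Ii (Suc k) + (1 - \<omega>) * Wi (Suc k))"
  proof (rule sum_mono)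
    fix k assume "k \<in> {1..n-1}"
    then have k: "1 \<le> k" "k < n" by auto
    show "\<sigma> (\<tau> k) * Nstar q \<omega> \<le> \<omega> * Ii (Suc k) + (1 - \<omega>) * Wi (Suc k)"
      unfolding Ii_def Wi_def using slot_lb[OF perm k, of \<omega> q y] om Fq Fq' by simp
  qed
  then have A: "Nstar q \<omega> * (\<Sum>k=1..n-1. \<sigma> (\<tau> k)) \<le> appt_cost M Bs n \<tau> y \<omega>"
    unfolding C by (simp add: sum_distrib_left mult.commute)
  have nn: "n = Suc (n - 1)" using n1 by simp
  have bij: "bij_betw \<tau> {1..n} {1..n}" using perm by (rule permutes_imp_bij)
  have R: "(\<Sum>k=1..n. \<sigma> (\<tau> k)) = (\<Sum>i=1..n. \<sigma> i)" using sum.reindex_bij_betw[OF bij, of \<sigma>] .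
  have split1: "(\<Sum>k=1..n. \<sigma> (\<tau> k)) = (\<Sum>k=1..n-1. \<sigma> (\<tau> k)) + \<sigma> (\<tau> n)"
    by (rule sum_last[OF n1])
  have split2: "(\<Sum>i=1..n. \<sigma> i) = (\<Sum>i=1..n-1. \<sigma> i) + \<sigma> n"
    by (rule sum_last[OF n1])
  have tn: "\<tau> n \<in> {1..n}" using tau_in[OF perm, of n] n1 by simp
  have "\<sigma> (\<tau> n) \<le> \<sigma> n" using mono[of "\<tau> n" n] tn by simp
  then have Ssub: "(\<Sum>i=1..n-1. \<sigma> i) \<le> (\<Sum>k=1..n-1. \<sigma> (\<tau> k))" using R split1 split2 by linarith
  have "Nstar q \<omega> * (\<Sum>i=1..n-1. \<sigma> i) \<le> Nstar q \<omega> * (\<Sum>k=1..n-1. \<sigma> (\<tau> k))"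
    using Ssub Nstar_nonneg[of \<omega> q] om by (intro mult_left_mono) auto
  then show ?thesis using A by linarith
qed

end

theorem theorem5p1:
  fixes M :: "'a measure" and Bs :: "nat \<Rightarrow> 'a \<Rightarrow> real"
    and N :: "'b measure" and B :: "'b \<Rightarrow> real"
    and n :: nat and \<omega> :: real and \<mu> \<sigma> :: "nat \<Rightarrow> real"
  assumes "n \<ge> 2"
    and "0 < \<omega>" and "\<omega> < 1"
    and "prob_space N" and "B \<in> borel_measurable N"
    and "integrable N (\<lambda>s. (B s)^2)"
    and "prob_space.expectation N B = 0"
    and "prob_space.variance N B = 1"
    and "prob_space M"
    and "\<And>i. i \<in> {1..n} \<Longrightarrow> Bs i \<in> borel_measurable M"
    and "prob_space.indep_vars M (\<lambda>_. borel) Bs {1..n}"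
    and "\<And>i. i \<in> {1..n} \<Longrightarrow> distr M borel (Bs i) = distr N borel (\<lambda>s. \<mu> i + \<sigma> i * B s)"
    and "\<And>i. i \<in> {1..n} \<Longrightarrow> 0 < \<sigma> i"
    and "\<And>i j. 1 \<le> i \<Longrightarrow> i \<le> j \<Longrightarrow> j \<le> n \<Longrightarrow> \<sigma> i \<le> \<sigma> j"
  defines "\<alpha> \<equiv> sqrt ((1 - \<omega>) / (2 * \<omega>) + \<sigma> (n - 1) / (2 * (\<Sum>i = 1..n - 1. \<sigma> i)))"
  defines "x \<equiv> (\<lambda>i. \<mu> i + \<alpha> * \<sigma> i)"
  shows "appt_cost M Bs n id x \<omega> /
           (INF p \<in> {(\<tau>, y). \<tau> permutes {1..n} \<and> (\<forall>j \<in> {1..n}. 0 \<le> y j)}.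
              appt_cost M Bs n (fst p) (snd p) \<omega>)
         \<le> K_bound N B \<omega>"
proof -
  note A = assms
  interpret appt M Bs N B n \<mu> \<sigma>
    by (rule appt.intro[OF A(9) A(4) A(5) A(6) A(7) A(8) A(10) A(11) A(12) A(13)])
  have xdef: "x = (\<lambda>i. \<mu> i + \<alpha> * \<sigma> i)" using A(16) by simp
  have adef: "\<alpha> = sqrt ((1 - \<omega>) / (2 * \<omega>) + \<sigma> (n - 1) / (2 * (\<Sum>i = 1..n - 1. \<sigma> i)))" using A(15) by simp
  define S where "S = (\<Sum>i = 1..n - 1. \<sigma> i)"
  define q where "q = quantile N B (1 - \<omega>)"
  have p: "0 < 1 - \<omega>" "1 - \<omega> < 1" using A(2,3) by auto
  note QP = quantile_props[OF A(4) A(5) p]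
  have Fq: "1 - \<omega> \<le> measure N {s\<in>space N. B s \<le> q}" using QP(1) unfolding q_def .
  have Fq': "measure N {s\<in>space N. B s < q} \<le> 1 - \<omega>" using QP(2) unfolding q_def .
  have ub: "appt_cost M Bs n id x \<omega> \<le> sqrt (2 * \<omega>) * S"
    unfolding xdef by (rule id_cost_ub[OF A(1) A(2) A(3) A(14) S_def adef[folded S_def]])
  have c_pos: "0 < \<sigma> (n-1)" using sp[of "n-1"] A(1) by simp
  have c_le: "\<sigma> (n-1) \<le> S" unfolding S_def
  proof (rule member_le_sum)
    show "n - 1 \<in> {1..n-1}" using A(1) by simp
    show "\<And>x. x \<in> {1..n - 1} - {n - 1} \<Longrightarrow> 0 \<le> \<sigma> x" using sp by (auto intro: less_imp_le)
  qed simp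
  have S_pos: "0 < S" using c_pos c_le by simp
  have Np: "0 < Nstar q \<omega>" using Nstar_pos[OF A(2) A(3)] .
  define D where "D = (INF p \<in> {(\<tau>, y). \<tau> permutes {1..n} \<and> (\<forall>j \<in> {1..n}. 0 \<le> y j)}.
              appt_cost M Bs n (fst p) (snd p) \<omega>)"
  have D_ge: "Nstar q \<omega> * S \<le> D" unfolding D_def
  proof (rule cINF_greatest)
    show "{(\<tau>, y). \<tau> permutes {1..n} \<and> (\<forall>j \<in> {1..n}. 0 \<le> (y j :: real))} \<noteq> {}"
    proof -
      have "(id, \<lambda>_. 0) \<in> {(\<tau>, y). \<tau> permutes {1..n} \<and> (\<forall>j \<in> {1..n}. 0 \<le> (y j :: real))}"
        using id_perm by simp
      then show ?thesis by blast
    qed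
    fix pp :: "(nat \<Rightarrow> nat) \<times> (nat \<Rightarrow> real)"
    assume "pp \<in> {(\<tau>, y). \<tau> permutes {1..n} \<and> (\<forall>j \<in> {1..n}. 0 \<le> y j)}"
    then have perm: "fst pp permutes {1..n}" by auto
    show "Nstar q \<omega> * S \<le> appt_cost M Bs n (fst pp) (snd pp) \<omega>"
      unfolding S_def by (rule cost_lb[OF perm A(1) A(2) A(3) A(14) Fq Fq'])
  qed
  have NS: "0 < Nstar q \<omega> * S" using Np S_pos by simp
  have D_pos: "0 < D" using NS D_ge by linarith
  have K: "K_bound N B \<omega> = sqrt (2 * \<omega>) / Nstar q \<omega>"
    unfolding K_bound_def Let_def Nstar_def q_def ..
  have "appt_cost M Bs n id x \<omega> / D \<le> sqrt (2 * \<omega>) * S / D"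
    using ub D_pos by (intro divide_right_mono) auto
  also have "\<dots> \<le> sqrt (2 * \<omega>) * S / (Nstar q \<omega> * S)"
    using D_ge NS S_pos A(2) by (intro divide_left_mono) auto
  also have "\<dots> = sqrt (2 * \<omega>) / Nstar q \<omega>" using S_pos by simp
  finally show ?thesis unfolding K D_def .
qed

end
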